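(* Let $m\ge0$ be an integer. Every $f\in LC(O,K)$ can be expanded uniquely as $$f(x)=\sum_{n=0}^\infty\beta_n^{(m)}\,\mathcal{D}_n(x)^{q^m}\qquad(x\in O),$$ with $\beta_n^{(m)}\in K$, $\beta_n^{(m)}\to0$, where the coefficients are given by $$\beta_n^{(m)}=\big((\Delta-[m]I)^nf\big)(1)=\sum_{i=0}^n\sum_{j=i}^n(-1)^{n-i}\binom{n}{j}[m]^{n-j}f(T^i)\,\mathcal{D}_i(T^j).$$
   Context: Let $q$ be a prime power, $K=\mathbf{F}_q((T))$, $O=\mathbf{F}_q[[T]]$, with $T$-adic absolute value, and $LC(O,K)$ the $K$-Banach space (sup-norm) of continuous $\mathbf{F}_q$-linear functions $O\to K$. Put $[m]=T^{q^m}-T$ (so $[0]=0$). Hasse derivatives: $\mathcal{D}_n(\sum_ia_iT^i)=\sum_i\binom{i}{n}a_iT^{i-n}$ (binomials in $\mathbf{F}_q$). The Carlitz difference operator $\Delta$ on $LC(O,K)$ is $(\Delta f)(x)=f(Tx)-Tf(x)$, and $I$ is the identity operator; binomial coefficients $\binom{n}{j}$ are read in $\mathbf{F}_q$. *)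

theory Defs
  imports "HOL-Computational_Algebra.Formal_Laurent_Series" "HOL-Library.Cardinality"
begin

text \<open>O = F_q[[T]] is modelled as the type 'a fps, K = F_q((T)) as 'a fls, where
 'a is a finite field (so q = CARD('a) is a prime power). Both carry the library's
 T-adic metric (base 2 instead of q, which gives the same topology and the same notion
 of convergence).\<close>

definition Fq_linear :: "('a::field fps \<Rightarrow> 'a fls) \<Rightarrow> bool" where
  "Fq_linear f \<longleftrightarrow> (\<forall>x y. f (x + y) = f x + f y) \<and>
                    (\<forall>c x. f (fps_const c * x) = fls_const c * f x)"

definition LC :: "('a::{field,finite} fps \<Rightarrow> 'a fls) set" where
  "LC = {f. Fq_linear f \<and> continuous_on UNIV f}"

definition hasse :: "nat \<Rightarrow> 'a::field fps \<Rightarrow> 'a fps" where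
  "hasse n x = Abs_fps (\<lambda>k. of_nat ((k + n) choose n) * (x $ (k + n)))"

definition bracket :: "nat \<Rightarrow> 'a::{field,finite} fls" where
  "bracket m = fls_X ^ (CARD('a) ^ m) - fls_X"

definition Carlitz_Delta :: "('a::field fps \<Rightarrow> 'a fls) \<Rightarrow> ('a fps \<Rightarrow> 'a fls)" where
  "Carlitz_Delta f = (\<lambda>x. f (fps_X * x) - fls_X * f x)"

definition Delta_minus :: "nat \<Rightarrow> ('a::{field,finite} fps \<Rightarrow> 'a fls) \<Rightarrow> ('a fps \<Rightarrow> 'a fls)" where
  "Delta_minus m f = (\<lambda>x. Carlitz_Delta f x - bracket m * f x)"

end

theory Submission
  imports Defs
begin
unbundle fps_syntax

lemma ff_pow: "(x::'a::{field,finite}) ^ CARD('a) = x"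
proof (cases "x = 0")
  case False
  have "x * (\<Prod>y\<in>UNIV-{0}. x * y) = x * x ^ (card (UNIV :: 'a set) - 1) * \<Prod>(UNIV-{0})"
    by (simp add: prod.distrib mult_ac)
  also have "x * x ^ (card (UNIV :: 'a set) - 1) = x ^ Suc (card (UNIV :: 'a set) - 1)"
    by (subst power_Suc) auto
  also have "Suc (card (UNIV :: 'a set) - 1) = card (UNIV :: 'a set)"
    using finite_UNIV_card_ge_0[where ?'a = 'a] by simp
  also have "(\<Prod>y\<in>UNIV-{0}. x * y) = (\<Prod>y\<in>UNIV-{0}. y)"
    by (rule prod.reindex_bij_witness[of _ "\<lambda>y. y / x" "\<lambda>y. x * y"]) (use False in auto)
  finally show ?thesis
    by simp
qed (use finite_UNIV_card_ge_0[where ?'a = 'a] in auto)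

lemma ff_powQ: "(x::'a::{field,finite}) ^ (CARD('a) ^ m) = x"
  by (induction m) (simp_all add: ff_pow power_mult)

lemma card_ge2: "CARD('a::{field,finite}) \<ge> 2"
proof -
  have "{0::'a, 1} \<subseteq> UNIV" by simp
  hence "card {0::'a, 1} \<le> CARD('a)" by (intro card_mono) auto
  thus ?thesis by simp
qed

lemma choose_card_zero:
  assumes "0 < k" "k < CARD('a::{field,finite})"
  shows "of_nat (CARD('a) choose k) = (0::'a)"
proof -
  define q where "q = CARD('a)"
  have q2: "q \<ge> 2" using card_ge2[where 'a='a] by (simp add: q_def)
  define p :: "'a poly" where "p = [:1,1:]^q - monom 1 q - 1"
  have roots: "poly p x = 0" for x
    using ff_pow[of "1+x"] ff_pow[of x] by (simp add: p_def poly_monom q_def algebra_simps)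
  have cq: "coeff ([:1,1:]^q :: 'a poly) i = (if i \<le> q then of_nat (q choose i) else 0)" for i :: nat
  proof (cases "i \<le> q")
    case True thus ?thesis by (simp add: coeff_linear_poly_power)
  next
    case False
    have d: "degree ([:1::'a,1:]^q) = q" by (simp add: degree_power_eq)
    have "coeff ([:1::'a,1:]^q) i = 0"
      by (rule coeff_eq_0) (use d False in linarith)
    thus ?thesis using False by (simp only: if_False)
  qed
  have cp: "coeff p i = (if i \<le> q then of_nat (q choose i) else 0) - (if i = q then 1 else 0) - (if i = 0 then 1 else 0)" for i
    by (simp add: p_def cq coeff_monom)
  have "p = 0"
  proof (rule ccontr)
    assume "p \<noteq> 0"
    hence "card {x. poly p x = 0} \<le> degree p" by (rule card_poly_roots_bound)
    moreover have "degree p \<le> q - 1"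
      by (rule degree_le) (use q2 in \<open>auto simp: cp\<close>)
    moreover have "{x. poly p x = 0} = UNIV" using roots by auto
    ultimately show False using q2 by (simp add: q_def)
  qed
  hence "coeff p k = 0" by simp
  thus ?thesis using assms by (simp add: cp q_def)
qed

lemma frob_fps: "((u::'a::{field,finite} fps) + v) ^ CARD('a) = u ^ CARD('a) + v ^ CARD('a)"
proof -
  define q where "q = CARD('a)"
  have q2: "q \<ge> 2" using card_ge2[where 'a='a] by (simp add: q_def)
  have "(u + v) ^ q = (\<Sum>k\<le>q. of_nat (q choose k) * u ^ k * v ^ (q - k))"
    by (rule binomial_ring)
  also have "\<dots> = (\<Sum>k\<in>{0,q}. of_nat (q choose k) * u ^ k * v ^ (q - k))"
  proof (intro sum.mono_neutral_right ballI)
    fix k assume "k \<in> {..q} - {0, q}"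
    hence k: "k > 0" "k < q" by auto
    have "(of_nat (q choose k) :: 'a fps) = fps_const (of_nat (q choose k))"
      by (simp add: fps_of_nat)
    also have "\<dots> = 0" using choose_card_zero[of k, where 'a='a] k by (simp add: q_def)
    finally show "of_nat (q choose k) * u ^ k * v ^ (q - k) = 0" by simp
  qed auto
  finally show ?thesis using q2 by (simp add: q_def add_ac)
qed

lemma frob_fpsQ: "((u::'a::{field,finite} fps) + v) ^ (CARD('a)^m) = u ^ (CARD('a)^m) + v ^ (CARD('a)^m)"
proof (induction m)
  case (Suc m)
  have "(u + v) ^ (CARD('a)^Suc m) = ((u + v) ^ (CARD('a)^m)) ^ CARD('a)"
    by (simp add: power_mult[symmetric] mult.commute)
  also have "\<dots> = (u ^ (CARD('a)^m)) ^ CARD('a) + (v ^ (CARD('a)^m)) ^ CARD('a)"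
    by (simp add: Suc.IH frob_fps)
  finally show ?case by (simp add: power_mult[symmetric] mult.commute)
qed simp

definition vge :: "'a::field fls \<Rightarrow> int \<Rightarrow> bool" where
  "vge a M \<longleftrightarrow> (\<forall>k<M. a $$ k = 0)"

definition fvge :: "'a::field fps \<Rightarrow> nat \<Rightarrow> bool" where
  "fvge x N \<longleftrightarrow> (\<forall>k<N. x $ k = 0)"

lemma vge_0 [simp]: "vge 0 M" by (simp add: vge_def)
lemma vge_add: "vge a M \<Longrightarrow> vge b M \<Longrightarrow> vge (a + b) M" by (simp add: vge_def)
lemma vge_diff: "vge a M \<Longrightarrow> vge b M \<Longrightarrow> vge (a - b) M" by (simp add: vge_def)
lemma vge_uminus: "vge a M \<Longrightarrow> vge (- a) M" by (simp add: vge_def)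
lemma vge_sum: "(\<And>i. i \<in> A \<Longrightarrow> vge (g i) M) \<Longrightarrow> vge (\<Sum>i\<in>A. g i) M"
  by (induction A rule: infinite_finite_induct) (auto intro: vge_add)
lemma vge_mono: "vge a M \<Longrightarrow> M' \<le> M \<Longrightarrow> vge a M'" by (simp add: vge_def)

lemma vge_iff: "vge a M \<longleftrightarrow> a = 0 \<or> M \<le> fls_subdegree a"
  unfolding vge_def
  by (metis fls_eq0_below_subdegree fls_subdegree_geI fls_zero_nth not_le nth_fls_subdegree_nonzero order_less_le_trans)

lemma vge_mult: "vge a M1 \<Longrightarrow> vge b M2 \<Longrightarrow> vge (a * b) (M1 + M2)"
  by (cases "a = 0"; cases "b = 0") (auto simp: vge_iff)

lemma vge_fps: "fvge x N \<Longrightarrow> vge (fps_to_fls x) (int N)"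
  by (auto simp: vge_def fvge_def)
lemma vge_fps0: "vge (fps_to_fls x) 0"
  by (auto simp: vge_def)

lemma fvge_mult: "fvge u K \<Longrightarrow> fvge (u * v) K"
  by (auto simp: fvge_def fps_mult_nth intro!: sum.neutral)

lemma fvge_power: "fvge u K \<Longrightarrow> 0 < Q \<Longrightarrow> fvge (u ^ Q) K"
  by (cases Q) (auto intro: fvge_mult)

lemma vge_bound: "\<exists>B::nat. vge a (- int B)"
proof (cases "a = 0")
  case False
  show ?thesis by (rule exI[of _ "nat (- fls_subdegree a)"]) (use False in \<open>auto simp: vge_iff\<close>)
qed simp

lemma vge_bound_fin: "\<exists>B::nat. \<forall>k<(K::nat). vge (g k) (- int B)"
proof (induction K)
  case (Suc K)
  then obtain B where B: "\<forall>k<K. vge (g k) (- int B)" by blast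
  obtain B' where B': "vge (g K) (- int B')" using vge_bound by blast
  show ?case
    by (rule exI[of _ "max B B'"]) (use B B' less_Suc_eq in \<open>fastforce intro: vge_mono\<close>)
qed simp

lemma dist_fls_0: "dist (a::'a::field fls) b = dist (a - b) 0"
  by (simp add: dist_fls_def)

lemma small1: "vge a (int M) \<Longrightarrow> dist a 0 \<le> inverse (2 ^ M)"
proof (cases "a = 0")
  case False
  assume "vge a (int M)"
  hence "int M \<le> fls_subdegree a" using False by (simp add: vge_iff)
  hence "M \<le> nat (fls_subdegree a)" by linarith
  hence "(2::real) ^ M \<le> 2 ^ nat (fls_subdegree a)" by (intro power_increasing) auto
  thus ?thesis using False \<open>int M \<le> fls_subdegree a\<close>
    by (simp add: dist_fls_def le_imp_inverse_le)
qed simp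

lemma small2: "dist a 0 < inverse (2 ^ M) \<Longrightarrow> vge a (int M)"
proof (cases "a = 0")
  case False
  assume d: "dist a 0 < inverse (2 ^ M)"
  show ?thesis
  proof (cases "fls_subdegree a \<ge> 0")
    case True
    hence "inverse ((2::real) ^ nat (fls_subdegree a)) < inverse (2 ^ M)" using d False by (simp add: dist_fls_def)
    hence "(2::real) ^ M < 2 ^ nat (fls_subdegree a)" by (simp add: inverse_less_iff_less)
    hence "M < nat (fls_subdegree a)" using power_less_imp_less_exp by fastforce
    thus ?thesis using False by (simp add: vge_iff)
  next
    case F: False
    hence "(2::real) ^ nat (- fls_subdegree a) < inverse (2 ^ M)" using d False by (simp add: dist_fls_def)
    moreover have "(1::real) \<le> 2 ^ nat (- fls_subdegree a)" by simp
    moreover have "inverse ((2::real) ^ M) \<le> 1"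
    proof -
      have "inverse ((2::real) ^ M) = (1/2)^M" by (simp add: power_one_over inverse_eq_divide)
      also have "\<dots> \<le> 1" by (rule power_le_one) auto
      finally show ?thesis .
    qed
    ultimately show ?thesis by linarith
  qed
qed simp

lemma ex_small: "(e::real) > 0 \<Longrightarrow> \<exists>M. inverse (2 ^ M) < e"
proof -
  assume e: "e > 0"
  obtain n :: nat where n: "inverse e < real n" using reals_Archimedean2 by blast
  have "n < 2 ^ n" by (rule less_exp)
  hence "real n < 2 ^ n" by (metis of_nat_less_iff of_nat_numeral of_nat_power)
  hence "inverse e < 2 ^ n" using n by linarith
  hence "inverse (2 ^ n) < e" using e
    by (metis inverse_inverse_eq inverse_less_iff_less inverse_positive_iff_positive zero_less_numeral zero_less_power)
  thus ?thesis by blast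
qed

lemma lim_iff: "(s \<longlonglongrightarrow> (L::'a::field fls)) \<longleftrightarrow> (\<forall>M::nat. eventually (\<lambda>n. vge (s n - L) (int M)) sequentially)"
proof
  assume l: "s \<longlonglongrightarrow> L"
  show "\<forall>M::nat. eventually (\<lambda>n. vge (s n - L) (int M)) sequentially"
  proof
    fix M :: nat
    have "eventually (\<lambda>n. dist (s n) L < inverse (2 ^ M)) sequentially"
      using l by (simp add: tendsto_iff)
    thus "eventually (\<lambda>n. vge (s n - L) (int M)) sequentially"
      by eventually_elim (metis dist_fls_0 small2)
  qed
next
  assume r: "\<forall>M::nat. eventually (\<lambda>n. vge (s n - L) (int M)) sequentially"
  show "s \<longlonglongrightarrow> L"
  proof (rule tendstoI)
    fix e :: real assume "e > 0"
    then obtain M where M: "inverse (2 ^ M) < e" using ex_small by blast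
    from r have "eventually (\<lambda>n. vge (s n - L) (int M)) sequentially" by blast
    thus "eventually (\<lambda>n. dist (s n) L < e) sequentially"
      by eventually_elim (metis dist_fls_0 small1 M order_le_less_trans)
  qed
qed

lemma fps_small: "fvge (x::'a::field fps) N \<Longrightarrow> dist x 0 \<le> inverse (2 ^ N)"
proof (cases "x = 0")
  case False
  assume "fvge x N"
  hence "N \<le> subdegree x" using False by (intro subdegree_geI) (auto simp: fvge_def)
  hence "(2::real) ^ N \<le> 2 ^ subdegree x" by (intro power_increasing) auto
  thus ?thesis using False by (simp add: dist_fps_def le_imp_inverse_le)
qed simp

lemma cont_vge:
  fixes f :: "'a::field fps \<Rightarrow> 'a fls"
  assumes "continuous_on UNIV f" "f 0 = 0"
  shows "\<exists>N. \<forall>x. fvge x N \<longrightarrow> vge (f x) (int M)"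
proof -
  have "isCont f 0" using assms(1) continuous_on_eq_continuous_at by blast
  hence "f \<midarrow>0\<rightarrow> f 0" by (simp add: isCont_def)
  then obtain d where d: "d > 0" "\<forall>x. x \<noteq> 0 \<and> dist x 0 < d \<longrightarrow> dist (f x) (f 0) < inverse (2 ^ M)"
    using metric_LIM_D[OF \<open>f \<midarrow>0\<rightarrow> f 0\<close>, of "inverse (2 ^ M)"] by auto
  obtain N where N: "inverse (2 ^ N) < d" using ex_small d(1) by blast
  show ?thesis
  proof (intro exI allI impI)
    fix x :: "'a fps" assume x: "fvge x N"
    show "vge (f x) (int M)"
    proof (cases "x = 0")
      case False
      have "dist x 0 < d" using fps_small[OF x] N by linarith
      hence "dist (f x) 0 < inverse (2 ^ M)" using d(2) False assms(2) by auto
      thus ?thesis by (rule small2)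
    qed (simp add: assms(2))
  qed
qed

lemma hasse_add: "hasse n (x + y) = hasse n x + hasse n y"
  by (rule fps_ext) (simp add: hasse_def algebra_simps)

lemma hasse_scal: "hasse n (fps_const c * x) = fps_const c * hasse n x"
  by (rule fps_ext) (simp add: hasse_def algebra_simps)

lemma hasse_X: "hasse n (fps_X ^ k :: 'a::field fps) = (if n \<le> k then of_nat (k choose n) * fps_X ^ (k - n) else 0)"
proof (rule fps_ext)
  fix j
  show "hasse n (fps_X ^ k :: 'a fps) $ j = (if n \<le> k then of_nat (k choose n) * fps_X ^ (k - n) else 0) $ j"
    by (auto simp: hasse_def fps_of_nat[symmetric] simp del: fps_of_nat)
qed

lemma hasse_small: "fvge z N \<Longrightarrow> fvge (hasse n z) (N - n)"
  by (auto simp: fvge_def hasse_def)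

definition G :: "nat \<Rightarrow> nat \<Rightarrow> 'a::{field,finite} fps \<Rightarrow> 'a fls" where
  "G m n x = fps_to_fls (hasse n x ^ (CARD('a) ^ m))"

lemma G_add: "G m n (x + y) = G m n x + G m n y"
  by (simp add: G_def hasse_add frob_fpsQ)

lemma G_scal: "G m n (fps_const c * x) = fls_const c * G m n x"
proof -
  have "(fps_const c * hasse n x) ^ (CARD('a) ^ m) = fps_const c * hasse n x ^ (CARD('a) ^ m)"
    by (simp add: power_mult_distrib ff_powQ)
  thus ?thesis by (simp add: G_def hasse_scal fls_times_fps_to_fls)
qed

lemma G_X: "G m n (fps_X ^ k :: 'a::{field,finite} fps) =
   (if n \<le> k then of_nat (k choose n) * fls_X ^ ((k - n) * CARD('a) ^ m) else 0)"
proof (cases "n \<le> k")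
  case True
  have "(of_nat (k choose n) * fps_X ^ (k - n) :: 'a fps) ^ (CARD('a) ^ m)
      = fps_const (of_nat (k choose n) ^ (CARD('a) ^ m)) * fps_X ^ ((k - n) * CARD('a) ^ m)"
    by (simp add: power_mult_distrib power_mult fps_of_nat[symmetric] del: fps_of_nat)
  also have "\<dots> = of_nat (k choose n) * fps_X ^ ((k - n) * CARD('a) ^ m)"
    by (simp add: ff_powQ fps_of_nat)
  finally show ?thesis using True
    by (simp add: G_def hasse_X fls_times_fps_to_fls fps_to_fls_power)
qed (simp add: G_def hasse_X)

lemma G_small: "fvge z N \<Longrightarrow> vge (G m n z) (int (N - n))"
  unfolding G_def by (intro vge_fps fvge_power hasse_small) auto

lemma sum_reindex_ivl: "(j::nat) \<le> k \<Longrightarrow> (\<Sum>n\<in>{j..k}. g n) = (\<Sum>l\<le>k-j. g (l + j))"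
proof -
  assume "j \<le> k"
  hence "{j..k} = {0+j..(k-j)+j}" by simp
  hence "(\<Sum>n\<in>{j..k}. g n) = (\<Sum>l\<in>{0..k-j}. g (l + j))"
    by (simp only: sum.shift_bounds_cl_nat_ivl)
  thus ?thesis by (simp add: atLeast0AtMost)
qed

lemma sum_swap_tri: "(\<Sum>n\<le>(k::nat). \<Sum>j\<le>n. h n j) = (\<Sum>j\<le>k. \<Sum>n\<in>{j..k}. h n j)"
proof (induction k)
  case 0 thus ?case by simp
next
  case (Suc k)
  have "(\<Sum>j\<le>Suc k. \<Sum>n\<in>{j..Suc k}. h n j) = (\<Sum>j\<le>k. \<Sum>n\<in>{j..Suc k}. h n j) + h (Suc k) (Suc k)"
    by simp
  also have "(\<Sum>j\<le>k. \<Sum>n\<in>{j..Suc k}. h n j) = (\<Sum>j\<le>k. (\<Sum>n\<in>{j..k}. h n j) + h (Suc k) j)"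
    by (intro sum.cong refl) (simp add: sum.cl_ivl_Suc)
  finally show ?case using Suc by (simp add: sum.distrib)
qed

lemma alt_sum: "(\<Sum>n\<in>{j..k}. (-1::'r::comm_ring_1) ^ (n - j) * of_nat ((k - j) choose (n - j))) = (if j = k then 1 else 0)"
  if "j \<le> k"
proof -
  have "(\<Sum>n\<in>{j..k}. (-1::'r) ^ (n - j) * of_nat ((k - j) choose (n - j)))
      = (\<Sum>l\<le>k-j. (-1) ^ l * of_nat ((k - j) choose l))"
    using that by (simp add: sum_reindex_ivl)
  also have "\<dots> = (if j = k then 1 else 0)"
    using choose_alternating_sum[of "k - j", where 'a='r] that by auto
  finally show ?thesis .
qed

lemma inversion:
  fixes a :: "'r::comm_ring_1"
  shows "(\<Sum>n\<le>k. of_nat (k choose n) * a ^ (k - n) * (\<Sum>j\<le>n. of_nat (n choose j) * (-a) ^ (n - j) * F j)) = F k"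
proof -
  have "(\<Sum>n\<le>k. of_nat (k choose n) * a ^ (k - n) * (\<Sum>j\<le>n. of_nat (n choose j) * (-a) ^ (n - j) * F j))
     = (\<Sum>n\<le>k. \<Sum>j\<le>n. of_nat (k choose n) * a ^ (k - n) * (of_nat (n choose j) * (-a) ^ (n - j) * F j))"
    by (simp add: sum_distrib_left)
  also have "\<dots> = (\<Sum>j\<le>k. \<Sum>n\<in>{j..k}. of_nat (k choose n) * a ^ (k - n) * (of_nat (n choose j) * (-a) ^ (n - j) * F j))"
    by (rule sum_swap_tri)
  also have "\<dots> = (\<Sum>j\<le>k. of_nat (k choose j) * a ^ (k - j) * F j *
        (\<Sum>n\<in>{j..k}. (-1) ^ (n - j) * of_nat ((k - j) choose (n - j))))"
  proof (intro sum.cong refl)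
    fix j assume j: "j \<in> {..k}"
    show "(\<Sum>n\<in>{j..k}. of_nat (k choose n) * a ^ (k - n) * (of_nat (n choose j) * (-a) ^ (n - j) * F j))
       = of_nat (k choose j) * a ^ (k - j) * F j * (\<Sum>n\<in>{j..k}. (-1) ^ (n - j) * of_nat ((k - j) choose (n - j)))"
      unfolding sum_distrib_left
    proof (intro sum.cong refl)
      fix n assume n: "n \<in> {j..k}"
      have c: "(k choose n) * (n choose j) = (k choose j) * ((k - j) choose (n - j))"
        using n by (intro choose_mult) auto
      have p: "a ^ (k - n) * (-a) ^ (n - j) = (-1) ^ (n - j) * a ^ (k - j)"
      proof -
        have "a ^ (k - n) * (-a) ^ (n - j) = (-1) ^ (n - j) * (a ^ (k - n) * a ^ (n - j))"
          by (subst power_minus) (rule mult.left_commute)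
        also have "a ^ (k - n) * a ^ (n - j) = a ^ (k - j)"
          using n by (simp add: power_add[symmetric])
        finally show ?thesis .
      qed
      have "of_nat (k choose n) * a ^ (k - n) * (of_nat (n choose j) * (-a) ^ (n - j) * F j)
          = of_nat ((k choose n) * (n choose j)) * (a ^ (k - n) * (-a) ^ (n - j)) * F j"
        by (simp add: mult_ac)
      also have "\<dots> = of_nat ((k choose j) * ((k - j) choose (n - j))) * ((-1) ^ (n - j) * a ^ (k - j)) * F j"
        by (simp only: c p)
      finally show "of_nat (k choose n) * a ^ (k - n) * (of_nat (n choose j) * (-a) ^ (n - j) * F j)
          = of_nat (k choose j) * a ^ (k - j) * F j * ((-1) ^ (n - j) * of_nat ((k - j) choose (n - j)))"
        by (simp add: mult_ac)
    qed
  qed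
  also have "\<dots> = (\<Sum>j\<le>k. if j = k then F k else 0)"
    by (intro sum.cong refl) (simp add: alt_sum)
  also have "\<dots> = F k" by simp
  finally show ?thesis .
qed

lemma binom_aux:
  fixes x b :: "'r::comm_ring_1"
  assumes "i \<le> n"
  shows "(\<Sum>j\<in>{i..n}. of_nat (n choose j) * of_nat (j choose i) * b ^ (n - j) * x ^ (j - i))
       = of_nat (n choose i) * (x + b) ^ (n - i)"
proof -
  have "(\<Sum>j\<in>{i..n}. of_nat (n choose j) * of_nat (j choose i) * b ^ (n - j) * x ^ (j - i))
      = (\<Sum>l\<le>n-i. of_nat (n choose (l + i)) * of_nat ((l + i) choose i) * b ^ (n - (l + i)) * x ^ (l + i - i))"
    using assms by (rule sum_reindex_ivl)
  also have "\<dots> = (\<Sum>l\<le>n-i. of_nat (n choose i) * (of_nat ((n - i) choose l) * x ^ l * b ^ (n - i - l)))"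
  proof (intro sum.cong refl)
    fix l assume l: "l \<in> {..n-i}"
    have c: "(n choose (l + i)) * ((l + i) choose i) = (n choose i) * ((n - i) choose l)"
      using choose_mult[of i "l + i" n] l assms by auto
    have "of_nat (n choose (l + i)) * of_nat ((l + i) choose i) * b ^ (n - (l + i)) * x ^ (l + i - i)
        = (of_nat ((n choose (l + i)) * ((l + i) choose i)) :: 'r) * b ^ (n - i - l) * x ^ l"
      by (simp add: diff_diff_add add.commute)
    also have "\<dots> = of_nat (n choose i) * (of_nat ((n - i) choose l) * x ^ l * b ^ (n - i - l))"
      by (simp only: c) (simp add: mult_ac)
    finally show "of_nat (n choose (l + i)) * of_nat ((l + i) choose i) * b ^ (n - (l + i)) * x ^ (l + i - i)
        = of_nat (n choose i) * (of_nat ((n - i) choose l) * x ^ l * b ^ (n - i - l))" .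
  qed
  also have "\<dots> = of_nat (n choose i) * (x + b) ^ (n - i)"
    by (simp add: binomial_ring sum_distrib_left)
  finally show ?thesis .
qed

lemma pascal:
  fixes a :: "'r::comm_ring_1"
  shows "(\<Sum>k\<le>n. of_nat (n choose k) * (-a) ^ (n - k) * F (Suc k)) - a * (\<Sum>k\<le>n. of_nat (n choose k) * (-a) ^ (n - k) * F k)
       = (\<Sum>k\<le>Suc n. of_nat (Suc n choose k) * (-a) ^ (Suc n - k) * F k)"
proof -
  have r: "(\<Sum>k\<le>Suc n. of_nat (Suc n choose k) * (-a) ^ (Suc n - k) * F k)
     = (-a) ^ Suc n * F 0 + (\<Sum>k\<le>n. of_nat (n choose k) * (-a) ^ (n - k) * F (Suc k))
       + (\<Sum>k\<le>n. of_nat (n choose Suc k) * (-a) ^ (n - k) * F (Suc k))"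
    by (simp add: sum.atMost_Suc_shift[of _ n] sum.distrib algebra_simps del: sum.atMost_Suc)
  have "- a * (\<Sum>k\<le>n. of_nat (n choose k) * (-a) ^ (n - k) * F k)
      = (\<Sum>k\<le>n. of_nat (n choose k) * (-a) ^ (Suc n - k) * F k)"
    by (simp add: sum_distrib_left Suc_diff_le mult_ac)
  also have "\<dots> = (\<Sum>k\<le>Suc n. of_nat (n choose k) * (-a) ^ (Suc n - k) * F k)"
    by (simp add: binomial_eq_0)
  also have "\<dots> = (-a) ^ Suc n * F 0 + (\<Sum>k\<le>n. of_nat (n choose Suc k) * (-a) ^ (n - k) * F (Suc k))"
    by (simp only: sum.atMost_Suc_shift) simp
  finally have l: "- a * (\<Sum>k\<le>n. of_nat (n choose k) * (-a) ^ (n - k) * F k) = \<dots>" .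
  show ?thesis using l r by (simp add: algebra_simps)
qed


lemma fvge_mono: "fvge x N \<Longrightarrow> N' \<le> N \<Longrightarrow> fvge x N'"
  by (auto simp: fvge_def)

lemma fvge_X: "fvge (fps_X ^ k :: 'a::field fps) N \<longleftrightarrow> (N \<le> k)"
  by (auto simp: fvge_def)

lemma fvge_cutoff: "fvge (x - fps_cutoff N x) N"
  by (auto simp: fvge_def)

lemma vge_pow: "vge u M \<Longrightarrow> vge (u ^ j) (int j * M)"
proof (induction j)
  case 0 thus ?case by (simp add: vge_def)
next
  case (Suc j)
  have "vge (u * u ^ j) (M + int j * M)" using Suc by (intro vge_mult) auto
  thus ?case by (simp add: algebra_simps)
qed

lemma vge_of_nat: "vge (of_nat c :: 'a::field fls) 0"
  by (simp add: vge_def fls_of_nat_nth)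

lemma vge_a: "vge (- (fls_X ^ (CARD('a::{field,finite}) ^ m) :: 'a fls)) 1"
proof -
  have "0 < CARD('a) ^ m" by simp
  hence "1 \<le> int (CARD('a) ^ m)" by linarith
  thus ?thesis unfolding vge_def
  proof (intro allI impI)
    fix k :: int assume "1 \<le> int (CARD('a) ^ m)" "k < 1"
    hence "k \<noteq> int (CARD('a) ^ m)" by linarith
    thus "(- (fls_X ^ (CARD('a) ^ m) :: 'a fls)) $$ k = 0" by simp
  qed
qed

lemma vge_apow: "vge ((- (fls_X ^ (CARD('a::{field,finite}) ^ m) :: 'a fls)) ^ j) (int j)"
  using vge_pow[OF vge_a, of m j] by simp

lemma cutoff_zero:
  fixes e :: "'a::field fps \<Rightarrow> 'a fls"
  assumes add: "\<And>x y. e (x + y) = e x + e y"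
    and scal: "\<And>c x. e (fps_const c * x) = fls_const c * e x"
    and base: "\<And>k. k < N \<Longrightarrow> e (fps_X ^ k) = 0"
  shows "e (fps_cutoff N x) = 0"
  using base
proof (induction N)
  case 0
  have "e 0 = e 0 + e 0" using add[of 0 0] by simp
  thus ?case by (metis add_cancel_left_right fps_cutoff_0)
next
  case (Suc N)
  have "fps_cutoff (Suc N) x = fps_cutoff N x + fps_const (x $ N) * fps_X ^ N"
    by (rule fps_ext) (auto simp: less_Suc_eq)
  thus ?case using Suc by (simp add: add scal)
qed

lemma Dm_eq:
  fixes g :: "'a::{field,finite} fps \<Rightarrow> 'a fls"
  shows "Delta_minus m g x = g (fps_X * x) - fls_X ^ (CARD('a::{field,finite}) ^ m) * g x"
  by (simp add: Delta_minus_def Carlitz_Delta_def bracket_def algebra_simps)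

lemma Dm_pow:
  fixes h :: "'a::{field,finite} fps \<Rightarrow> 'a fls"
  shows "((Delta_minus m ^^ n) h) x =
    (\<Sum>k\<le>n. of_nat (n choose k) * (- (fls_X ^ (CARD('a) ^ m))) ^ (n - k) * h (fps_X ^ k * x))"
proof (induction n arbitrary: x)
  case 0 thus ?case by simp
next
  case (Suc n)
  define a :: "'a fls" where "a = fls_X ^ (CARD('a) ^ m)"
  have "((Delta_minus m ^^ Suc n) h) x = ((Delta_minus m ^^ n) h) (fps_X * x) - a * ((Delta_minus m ^^ n) h) x"
    by (simp add: Dm_eq a_def)
  also have "\<dots> = (\<Sum>k\<le>n. of_nat (n choose k) * (-a) ^ (n - k) * h (fps_X ^ Suc k * x))
       - a * (\<Sum>k\<le>n. of_nat (n choose k) * (-a) ^ (n - k) * h (fps_X ^ k * x))"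
  proof -
    have e: "fps_X ^ k * (fps_X * x) = fps_X ^ Suc k * x" for k :: nat
      by (simp only: mult.assoc[symmetric] power_Suc2)
    show ?thesis by (simp only: Suc.IH a_def e)
  qed
  also have "\<dots> = (\<Sum>k\<le>Suc n. of_nat (Suc n choose k) * (-a) ^ (Suc n - k) * h (fps_X ^ k * x))"
    by (rule pascal[where F = "\<lambda>k. h (fps_X ^ k * x)"])
  finally show ?case by (simp add: a_def)
qed

theorem theorem12:
  fixes f :: "'a::{field,finite} fps \<Rightarrow> 'a fls" and m :: nat
  assumes "f \<in> LC"
  defines "P \<equiv> (\<lambda>\<beta>::nat \<Rightarrow> 'a fls. \<beta> \<longlonglongrightarrow> 0 \<and>
      (\<forall>x. (\<lambda>N. \<Sum>n<N. \<beta> n * fps_to_fls (hasse n x ^ (CARD('a) ^ m))) \<longlonglongrightarrow> f x))"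
  shows "(\<exists>!\<beta>. P \<beta>) \<and>
    (\<forall>\<beta>. P \<beta> \<longrightarrow> (\<forall>n.
       \<beta> n = ((Delta_minus m ^^ n) f) 1 \<and>
       \<beta> n = (\<Sum>i\<le>n. \<Sum>j\<in>{i..n}. (-1) ^ (n - i) * of_nat (n choose j) * bracket m ^ (n - j)
                 * f (fps_X ^ i) * fps_to_fls (hasse i (fps_X ^ j)))))"
proof -
  define a :: "'a fls" where "a = fls_X ^ (CARD('a) ^ m)"
  define F where "F k = f (fps_X ^ k)" for k
  define b where "b n = (\<Sum>k\<le>n. of_nat (n choose k) * (-a) ^ (n - k) * F k)" for n
  have fadd: "f (x + y) = f x + f y" for x y
    using assms(1) by (simp add: LC_def Fq_linear_def)
  have fscal: "f (fps_const c * x) = fls_const c * f x" for c x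
    using assms(1) by (simp add: LC_def Fq_linear_def)
  have fcont: "continuous_on UNIV f" using assms(1) by (simp add: LC_def)
  have f0: "f 0 = 0" using fadd[of 0 0] by (metis add_cancel_left_right add_0)
  have Pdef: "P \<beta> \<longleftrightarrow> \<beta> \<longlonglongrightarrow> 0 \<and> (\<forall>x. (\<lambda>N. \<Sum>n<N. \<beta> n * G m n x) \<longlonglongrightarrow> f x)" for \<beta>
    by (simp add: P_def G_def)
  have GX: "G m n (fps_X ^ k) = (if n \<le> k then of_nat (k choose n) * a ^ (k - n) else 0)" for n k
    by (simp add: G_X a_def power_mult[symmetric] mult.commute)
  have ext: "(\<Sum>n<N. \<beta> n * G m n (fps_X ^ k)) = (\<Sum>n\<le>k. \<beta> n * G m n (fps_X ^ k))"
    if "k < N" for \<beta> :: "nat \<Rightarrow> 'a fls" and N k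
    by (rule sum.mono_neutral_right) (use that in \<open>auto simp: GX\<close>)
  have delta: "((Delta_minus m ^^ n) f) 1 = b n" for n
    by (simp add: Dm_pow b_def F_def a_def)
  have double: "(\<Sum>i\<le>n. \<Sum>j\<in>{i..n}. (-1) ^ (n - i) * of_nat (n choose j) * bracket m ^ (n - j)
                 * f (fps_X ^ i) * fps_to_fls (hasse i (fps_X ^ j))) = b n" for n
    unfolding b_def
  proof (intro sum.cong refl)
    fix i assume i: "i \<in> {..n}"
    have "(\<Sum>j\<in>{i..n}. (-1) ^ (n - i) * of_nat (n choose j) * bracket m ^ (n - j)
                 * f (fps_X ^ i) * fps_to_fls (hasse i (fps_X ^ j)))
        = (\<Sum>j\<in>{i..n}. ((-1) ^ (n - i) * F i) * (of_nat (n choose j) * of_nat (j choose i) * bracket m ^ (n - j) * fls_X ^ (j - i)))"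
      by (intro sum.cong refl)
         (auto simp: hasse_X fls_times_fps_to_fls fps_to_fls_power F_def mult_ac)
    also have "\<dots> = ((-1) ^ (n - i) * F i) * (of_nat (n choose i) * (fls_X + bracket m) ^ (n - i))"
      using i by (simp add: sum_distrib_left[symmetric] binom_aux)
    also have "fls_X + bracket m = a" by (simp add: bracket_def a_def)
    also have "(-1) ^ (n - i) * F i * (of_nat (n choose i) * a ^ (n - i)) = of_nat (n choose i) * (-a) ^ (n - i) * F i"
      by (simp only: power_minus[of a] mult_ac)
    finally show "(\<Sum>j\<in>{i..n}. (-1) ^ (n - i) * of_nat (n choose j) * bracket m ^ (n - j)
                 * f (fps_X ^ i) * fps_to_fls (hasse i (fps_X ^ j))) = of_nat (n choose i) * (-a) ^ (n - i) * F i" .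
  qed
  have basis: "(\<Sum>n\<le>k. b n * G m n (fps_X ^ k)) = F k" for k
  proof -
    have "(\<Sum>n\<le>k. b n * G m n (fps_X ^ k)) = (\<Sum>n\<le>k. of_nat (k choose n) * a ^ (k - n) * b n)"
      by (intro sum.cong refl) (auto simp: GX mult_ac)
    also have "\<dots> = F k" unfolding b_def by (rule inversion)
    finally show ?thesis .
  qed
  have blim: "b \<longlonglongrightarrow> 0"
    unfolding lim_iff
  proof
    fix M :: nat
    obtain N0 where N0: "\<forall>x. fvge x N0 \<longrightarrow> vge (f x) (int M)" using cont_vge[OF fcont f0] by blast
    obtain B :: nat where B: "\<forall>k<N0. vge (F k) (- int B)" using vge_bound_fin by blast
    have "vge (b n) (int M)" if n: "n \<ge> N0 + M + B" for n
      unfolding b_def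
    proof (intro vge_sum)
      fix k assume k: "k \<in> {..n}"
      have p: "vge ((-a) ^ (n - k)) (int (n - k))" unfolding a_def by (rule vge_apow)
      show "vge (of_nat (n choose k) * (-a) ^ (n - k) * F k) (int M)"
      proof (cases "k < N0")
        case True
        have "vge (of_nat (n choose k) * (-a) ^ (n - k) * F k) (0 + int (n - k) + - int B)"
          using B True p by (intro vge_mult vge_of_nat) auto
        thus ?thesis by (rule vge_mono) (use n True in linarith)
      next
        case False
        have "vge (F k) (int M)" using N0 False unfolding F_def by (simp add: fvge_X)
        hence "vge (of_nat (n choose k) * (-a) ^ (n - k) * F k) (0 + 0 + int M)"
          using p by (intro vge_mult vge_of_nat) (auto elim: vge_mono)
        thus ?thesis by simp
      qed
    qed
    thus "eventually (\<lambda>n. vge (b n - 0) (int M)) sequentially"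
      by (auto simp: eventually_at_top_linorder)
  qed
  have conv: "(\<lambda>N. \<Sum>n<N. b n * G m n x) \<longlonglongrightarrow> f x" for x
    unfolding lim_iff
  proof
    fix M :: nat
    obtain N1 where N1: "\<forall>x. fvge x N1 \<longrightarrow> vge (f x) (int M)" using cont_vge[OF fcont f0] by blast
    obtain N2 where N2: "\<forall>n\<ge>N2. vge (b n - 0) (int M)"
      using blim unfolding lim_iff eventually_at_top_linorder by blast
    obtain B :: nat where B: "\<forall>n<N2. vge (b n) (- int B)" using vge_bound_fin by blast
    have "vge ((\<Sum>n<N. b n * G m n x) - f x) (int M)" if N: "N \<ge> N1 + N2 + M + B" for N
    proof -
      define e where "e y = f y - (\<Sum>n<N. b n * G m n y)" for y
      have eadd: "e (y + z) = e y + e z" for y z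
        by (simp add: e_def fadd G_add distrib_left sum.distrib)
      have escal: "e (fps_const c * y) = fls_const c * e y" for c y
      proof -
        have "e (fps_const c * y) = fls_const c * f y - (\<Sum>n<N. b n * (fls_const c * G m n y))"
          by (simp add: e_def fscal G_scal)
        also have "\<dots> = fls_const c * e y"
          by (simp add: e_def right_diff_distrib sum_distrib_left mult.left_commute)
        finally show ?thesis .
      qed
      have ebase: "e (fps_X ^ k) = 0" if "k < N" for k
        using that by (simp add: e_def ext basis F_def)
      define z where "z = x - fps_cutoff N x"
      have xz: "x = fps_cutoff N x + z" by (simp add: z_def)
      have ex: "e x = e z"
        using cutoff_zero[of e N x, OF eadd escal ebase] xz eadd by (metis add.left_neutral)
      have fz: "fvge z N" unfolding z_def by (rule fvge_cutoff)
      have "vge (f z) (int M)" using N1 fvge_mono[OF fz, of N1] N by auto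
      moreover have "vge (\<Sum>n<N. b n * G m n z) (int M)"
      proof (intro vge_sum)
        fix n assume n: "n \<in> {..<N}"
        show "vge (b n * G m n z) (int M)"
        proof (cases "n < N2")
          case True
          have "vge (b n * G m n z) (- int B + int (N - n))"
            using B True G_small[OF fz, of m n] by (intro vge_mult) auto
          thus ?thesis by (rule vge_mono) (use N True in linarith)
        next
          case False
          have "vge (b n * G m n z) (int M + 0)"
            using N2 False by (intro vge_mult) (auto simp: G_def vge_fps0)
          thus ?thesis by simp
        qed
      qed
      ultimately have "vge (e z) (int M)" unfolding e_def by (rule vge_diff)
      hence "vge (- e x) (int M)" using ex by (simp add: vge_uminus)
      thus ?thesis by (simp add: e_def)
    qed
    thus "eventually (\<lambda>N. vge ((\<Sum>n<N. b n * G m n x) - f x) (int M)) sequentially"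
      by (auto simp: eventually_at_top_linorder)
  qed
  have Pb: "P b" using blim conv by (simp add: Pdef)
  have uniq: "\<beta> = b" if "P \<beta>" for \<beta>
  proof -
    have id: "(\<Sum>n\<le>k. \<beta> n * G m n (fps_X ^ k)) = F k" for k
    proof -
      have l: "(\<lambda>N. \<Sum>n<N. \<beta> n * G m n (fps_X ^ k)) \<longlonglongrightarrow> F k"
        using that by (simp add: Pdef F_def)
      have "eventually (\<lambda>N. (\<Sum>n<N. \<beta> n * G m n (fps_X ^ k)) = (\<Sum>n\<le>k. \<beta> n * G m n (fps_X ^ k))) sequentially"
        unfolding eventually_at_top_linorder by (intro exI[of _ "Suc k"]) (auto intro: ext)
      hence "(\<lambda>N. \<Sum>n<N. \<beta> n * G m n (fps_X ^ k)) \<longlonglongrightarrow> (\<Sum>n\<le>k. \<beta> n * G m n (fps_X ^ k))"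
        by (rule tendsto_eventually)
      thus ?thesis using l LIMSEQ_unique by blast
    qed
    have "\<beta> k = b k" for k
    proof (induction k rule: less_induct)
      case (less k)
      have G1: "G m k (fps_X ^ k :: 'a fps) = 1" using GX[of k k] by simp
      have "(\<Sum>n<k. \<beta> n * G m n (fps_X ^ k)) + \<beta> k = F k"
        using id[of k] by (simp add: lessThan_Suc_atMost[symmetric] G1)
      moreover have "(\<Sum>n<k. b n * G m n (fps_X ^ k)) + b k = F k"
        using basis[of k] by (simp add: lessThan_Suc_atMost[symmetric] G1)
      moreover have "(\<Sum>n<k. \<beta> n * G m n (fps_X ^ k)) = (\<Sum>n<k. b n * G m n (fps_X ^ k))"
        using less by simp
      ultimately show ?case by (metis add_left_cancel)
    qed
    thus ?thesis by blast
  qed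
  show ?thesis
  proof
    show "\<exists>!\<beta>. P \<beta>" using Pb uniq by blast
  next
    show "\<forall>\<beta>. P \<beta> \<longrightarrow> (\<forall>n.
       \<beta> n = ((Delta_minus m ^^ n) f) 1 \<and>
       \<beta> n = (\<Sum>i\<le>n. \<Sum>j\<in>{i..n}. (-1) ^ (n - i) * of_nat (n choose j) * bracket m ^ (n - j)
                 * f (fps_X ^ i) * fps_to_fls (hasse i (fps_X ^ j))))"
      using uniq delta double by simp
  qed
qed

end
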